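(* Let $B(x)=\frac{x}{1+x^2}$, $B_0(x)=x$ and $B_j(x)=B(B_{j-1}(x))$ for $j\ge1$. For every $j\ge0$, the equation $B_j(x)=-1$ has exactly $2^j$ distinct roots in $\mathbb{C}$. *)

theory Defs
  imports Complex_Main
begin

definition Bmap :: "complex \<Rightarrow> complex" where
  "Bmap x = x / (1 + x^2)"

fun Biter :: "nat \<Rightarrow> complex \<Rightarrow> complex" where
  "Biter 0 x = x"
| "Biter (Suc j) x = Bmap (Biter j x)"

end

theory Submission
  imports Defs
begin

lemma Biter_Suc': "Biter (Suc j) x = Biter j (Bmap x)"
  by (induction j arbitrary: x) auto

lemma Bmap_eq_iff:
  assumes "y \<noteq> 0"
  shows "Bmap x = y \<longleftrightarrow> y * x^2 - x + y = 0"
proof (cases "1 + x^2 = 0")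
  case True
  then have "Bmap x = 0" by (simp add: Bmap_def)
  moreover have "y * x^2 - x + y = y * (1 + x^2) - x" by (simp add: algebra_simps)
  then have "y * x^2 - x + y = - x" using True by simp
  moreover have "x \<noteq> 0" using True by auto
  ultimately have "Bmap x \<noteq> y" "y * x^2 - x + y \<noteq> 0" using assms
    by (metis, metis neg_equal_0_iff_equal)
  then show ?thesis by blast
next
  case False
  have "Bmap x = y \<longleftrightarrow> x = y * (1 + x^2)" using False by (auto simp: Bmap_def field_simps)
  also have "\<dots> \<longleftrightarrow> y * x^2 - x + y = 0" by (auto simp: algebra_simps)
  finally show ?thesis .
qed

lemma preimage_two:
  assumes "y \<noteq> 0" "4 * y^2 \<noteq> 1"
  shows "finite {x. Bmap x = y} \<and> card {x. Bmap x = y} = 2"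
proof -
  define s where "s = csqrt (1 - 4 * y^2)"
  have s2: "s^2 = 1 - 4 * y^2" unfolding s_def by simp
  have s0: "s \<noteq> 0" using s2 assms(2) by auto
  define r1 where "r1 = (1 + s) / (2 * y)"
  define r2 where "r2 = (1 - s) / (2 * y)"
  have fac: "y * x^2 - x + y = y * (x - r1) * (x - r2)" for x
  proof -
    have "y * (x - r1) * (x - r2) = y * x^2 - x + (1 - s^2) / (4 * y)"
      unfolding r1_def r2_def using assms(1)
      by (simp add: field_simps power2_eq_square)
    also have "(1 - s^2) / (4 * y) = y" using s2 assms(1)
      by (simp add: field_simps power2_eq_square)
    finally show ?thesis by simp
  qed
  have "{x. Bmap x = y} = {r1, r2}"
    using assms(1) by (auto simp: Bmap_eq_iff fac)
  moreover have "r1 \<noteq> r2" using s0 assms(1) unfolding r1_def r2_def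
    by (auto simp: field_simps)
  ultimately show ?thesis by simp
qed

lemma half_bound: "\<bar>t / (1 + t^2)\<bar> \<le> (1/2::real)"
proof -
  have p: "1 + t^2 > 0" by (simp add: add_pos_nonneg)
  have "0 \<le> (\<bar>t\<bar> - 1)^2" by simp
  then have h: "2 * \<bar>t\<bar> \<le> 1 + t^2" by (simp add: power2_eq_square algebra_simps)
  have "\<bar>t / (1 + t^2)\<bar> = \<bar>t\<bar> / (1 + t^2)" using p by (simp add: abs_divide)
  also have "\<dots> \<le> 1/2" using p h by (simp add: pos_divide_le_eq)
  finally show ?thesis .
qed
lemma Bmap_real: "Bmap (complex_of_real t) = complex_of_real (t / (1 + t^2))"
  by (simp add: Bmap_def)

lemma real_iter:
  "\<exists>t. Biter (Suc j) (complex_of_real r) = complex_of_real t \<and> \<bar>t\<bar> \<le> 1/2"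
proof (induction j)
  case 0
  have "Biter (Suc 0) (complex_of_real r) = complex_of_real (r / (1 + r^2))"
    using Bmap_real[of r] by (simp only: Biter.simps)
  then show ?case using half_bound[of r] by blast
next
  case (Suc j)
  then obtain t where t: "Biter (Suc j) (complex_of_real r) = complex_of_real t" "\<bar>t\<bar> \<le> 1/2" by blast
  have "Biter (Suc (Suc j)) (complex_of_real r) = complex_of_real (t / (1 + t^2))"
    using t Bmap_real[of t] by (simp only: Biter.simps)
  then show ?case using half_bound[of t] by blast
qed

lemma not_special:
  assumes "Biter j y = -1"
  shows "y \<noteq> 0 \<and> 4 * y^2 \<noteq> 1"
proof -
  have nr: "Biter j (complex_of_real r) \<noteq> -1" if "r = 0 \<or> r = 1/2 \<or> r = -1/2" for r
  proof (cases j)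
    case 0
    have "complex_of_real r \<noteq> -1"
    proof
      assume "complex_of_real r = -1"
      hence "r = -1" by (metis of_real_eq_iff of_real_minus of_real_1)
      thus False using that by simp
    qed
    then show ?thesis using 0 by simp
  next
    case (Suc k)
    then obtain t where "Biter j (complex_of_real r) = complex_of_real t" "\<bar>t\<bar> \<le> 1/2"
      using real_iter by blast
    moreover have "complex_of_real t \<noteq> -1"
    proof
      assume "complex_of_real t = -1"
      hence "t = -1" by (metis of_real_eq_iff of_real_minus of_real_1)
      thus False using \<open>\<bar>t\<bar> \<le> 1/2\<close> by simp
    qed
    ultimately show ?thesis by simp
  qed
  have q: "y = 0 \<or> y = 1/2 \<or> y = -1/2" if "4 * y^2 = 1"
  proof -
    have "(2*y - 1) * (2*y + 1) = 0" using that by (simp add: algebra_simps power2_eq_square)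
    then have "2*y - 1 = 0 \<or> 2*y + 1 = 0" by simp
    then show ?thesis
    proof
      assume "2*y - 1 = 0"
      then have "y = 1/2" by (simp add: field_simps)
      then show ?thesis by simp
    next
      assume "2*y + 1 = 0"
      then have "2*y = -1" by (metis eq_neg_iff_add_eq_0)
      then have "y = -1/2" by (simp add: field_simps)
      then show ?thesis by simp
    qed
  qed
  have h: "4 * y^2 = 1 \<Longrightarrow> y = complex_of_real 0 \<or> y = complex_of_real (1/2) \<or> y = complex_of_real (-1/2)"
    using q by simp
  show ?thesis
  proof
    show "y \<noteq> 0" using assms nr[of 0] by auto
    show "4 * y^2 \<noteq> 1"
    proof
      assume "4 * y^2 = 1"
      then obtain r where "r = 0 \<or> r = 1/2 \<or> r = -1/2" "y = complex_of_real r" using h by blast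
      then show False using assms nr[of r] by auto
    qed
  qed
qed

theorem proposition2p8:
  fixes j :: nat
  shows "card {x :: complex. Biter j x = -1} = 2 ^ j"
proof (induction j)
  case 0
  then show ?case by simp
next
  case (Suc j)
  let ?S = "{x :: complex. Biter j x = -1}"
  have fin: "finite ?S" using Suc by (metis card.infinite power_not_zero zero_neq_numeral)
  have eq: "{x. Biter (Suc j) x = -1} = (\<Union>y\<in>?S. {x. Bmap x = y})"
    by (auto simp del: Biter.simps simp add: Biter_Suc')
  have pre: "\<And>y. y \<in> ?S \<Longrightarrow> finite {x. Bmap x = y} \<and> card {x. Bmap x = y} = 2"
    using preimage_two not_special by blast
  have "card (\<Union>y\<in>?S. {x. Bmap x = y}) = (\<Sum>y\<in>?S. card {x. Bmap x = y})"
    by (rule card_UN_disjoint) (use fin pre in auto)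
  also have "\<dots> = (\<Sum>y\<in>?S. 2)" using pre by simp
  also have "\<dots> = 2 * 2^j" using Suc by simp
  finally show ?case using eq by simp
qed

end
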